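(* Let $\Pi_0\preceq\Pi_1\preceq\cdots$ be a sequence of orthogonal projectors on a Hilbert space $\mathcal H$, and let $A_1,\dots,A_t$ be operators on $\mathcal H$ with $\|A_i\|_{\mathrm{op}}\le1$ such that for all integers $a,b\ge0$ and all $i$, $\|(\mathrm{id}-\Pi_{a+b})A_i\Pi_a\|_{\mathrm{op}}\le\varepsilon^{b+1}$. Then for every integer $\lambda\ge0$ and every state $|\psi\rangle$ with $\Pi_0|\psi\rangle=|\psi\rangle$, $$\big\|(\mathrm{id}-\Pi_\lambda)A_t\cdots A_1|\psi\rangle\big\|\le\binom{t+\lambda}{t-1}\varepsilon^{\lambda+1}.$$ *)

theory Defs
  imports "HOL-Analysis.Analysis"
begin

definition orth_proj :: "('a::{real_inner,complete_space} \<Rightarrow>\<^sub>L 'a) \<Rightarrow> bool" where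
  "orth_proj P \<longleftrightarrow> P o\<^sub>L P = P \<and> (\<forall>x y. inner (P x) y = inner x (P y))"

text \<open>Loewner order on orthogonal projectors: P below Q iff range P is contained in range Q,
  i.e. Q P = P.\<close>
definition proj_le :: "('a::{real_inner,complete_space} \<Rightarrow>\<^sub>L 'a) \<Rightarrow> ('a \<Rightarrow>\<^sub>L 'a) \<Rightarrow> bool" where
  "proj_le P Q \<longleftrightarrow> Q o\<^sub>L P = P"

fun op_prod :: "(nat \<Rightarrow> ('a::real_normed_vector \<Rightarrow>\<^sub>L 'a)) \<Rightarrow> nat \<Rightarrow> ('a \<Rightarrow>\<^sub>L 'a)" where
  "op_prod A 0 = id_blinfun"
| "op_prod A (Suc n) = A (Suc n) o\<^sub>L op_prod A n"

end

theory Submission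
  imports Defs
begin

definition cb :: "nat \<Rightarrow> nat \<Rightarrow> nat" where
  "cb k m = (if k = 0 then 0 else (k + m) choose (k - 1))"

lemma cb_Suc: "cb (Suc k) m = 1 + (\<Sum>j\<le>m. cb k j)"
proof (cases k)
  case 0
  then show ?thesis by (simp add: cb_def)
next
  case (Suc q)
  have "1 + (\<Sum>j\<le>m. (Suc q + j) choose q) = (Suc (Suc q) + m) choose (Suc q)"
  proof (induction m)
    case 0
    then show ?case by simp
  next
    case (Suc m)
    have "1 + (\<Sum>j\<le>Suc m. (Suc q + j) choose q)
        = ((Suc (Suc q) + m) choose (Suc q)) + ((Suc q + Suc m) choose q)"
      using Suc by simp
    also have "\<dots> = (Suc (Suc q) + Suc m) choose (Suc q)"
      by simp
    finally show ?case .
  qed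
  then show ?thesis using Suc by (simp add: cb_def)
qed

lemma proj_idem: "orth_proj P \<Longrightarrow> P (P x) = P x"
  unfolding orth_proj_def by (metis blinfun_apply_blinfun_compose)

lemma proj_contract:
  assumes "orth_proj P"
  shows "norm ((id_blinfun - P) x) \<le> norm x"
proof -
  have sa: "inner (P u) v = inner u (P v)" for u v
    using assms unfolding orth_proj_def by blast
  have "inner (x - P x) (P x) = inner x (P x) - inner (P x) (P x)"
    by (simp add: inner_diff_left)
  also have "inner (P x) (P x) = inner x (P (P x))" by (rule sa)
  also have "\<dots> = inner x (P x)" using proj_idem[OF assms] by simp
  finally have "orthogonal (x - P x) (P x)" by (simp add: orthogonal_def)
  then have "(norm ((x - P x) + P x))\<^sup>2 = (norm (x - P x))\<^sup>2 + (norm (P x))\<^sup>2"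
    by (rule norm_add_Pythagorean)
  then have "(norm (x - P x))\<^sup>2 \<le> (norm x)\<^sup>2" by simp
  then have "norm (x - P x) \<le> norm x" by (simp add: power2_le_iff_abs_le)
  then show ?thesis by (simp add: blinfun.diff_left)
qed

theorem mainTheorem17:
  fixes Pr :: "nat \<Rightarrow> ('a::{real_inner,complete_space} \<Rightarrow>\<^sub>L 'a)"
    and A :: "nat \<Rightarrow> ('a \<Rightarrow>\<^sub>L 'a)"
    and t :: nat and \<epsilon> :: real
  assumes proj: "\<And>n. orth_proj (Pr n)"
    and mono: "\<And>n. proj_le (Pr n) (Pr (Suc n))"
    and eps: "0 \<le> \<epsilon>"
    and normA: "\<And>i. i \<in> {1..t} \<Longrightarrow> norm (A i) \<le> 1"
    and leak: "\<And>i a b. i \<in> {1..t} \<Longrightarrow>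
                 norm ((id_blinfun - Pr (a + b)) o\<^sub>L A i o\<^sub>L Pr a) \<le> \<epsilon> ^ (b + 1)"
  shows "\<forall>(lam::nat) (\<psi>::'a). norm \<psi> = 1 \<longrightarrow> Pr 0 \<psi> = \<psi> \<longrightarrow>
           norm ((id_blinfun - Pr lam) (op_prod A t \<psi>))
             \<le> real ((t + lam) choose (t - 1)) * \<epsilon> ^ (lam + 1)"
proof (intro allI impI)
  fix lam :: nat and \<psi> :: 'a
  assume n\<psi>: "norm \<psi> = 1" and p\<psi>: "Pr 0 \<psi> = \<psi>"
  have chain: "Pr m (Pr n x) = Pr n x" if "n \<le> m" for m n x
    using that
  proof (induction m rule: dec_induct)
    case base
    then show ?case using proj_idem[OF proj] by simp
  next
    case (step m)
    have "Pr (Suc m) (Pr m y) = Pr m y" for y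
      using mono[of m] unfolding proj_le_def by (metis blinfun_apply_blinfun_compose)
    then show ?case using step.IH by metis
  qed
  have nrm: "k \<le> t \<Longrightarrow> norm (op_prod A k \<psi>) \<le> 1" for k
  proof (induction k)
    case 0
    then show ?case using n\<psi> by simp
  next
    case (Suc k)
    have "norm (op_prod A (Suc k) \<psi>) \<le> norm (A (Suc k)) * norm (op_prod A k \<psi>)"
      by (simp add: norm_blinfun)
    also have "\<dots> \<le> 1 * 1"
      using Suc normA[of "Suc k"] by (intro mult_mono) auto
    finally show ?case by simp
  qed
  have main: "k \<le> t \<Longrightarrow> \<forall>lam. norm ((id_blinfun - Pr lam) (op_prod A k \<psi>))
                  \<le> real (cb k lam) * \<epsilon> ^ (lam + 1)" for k
  proof (induction k)
    case 0
    have "(id_blinfun - Pr lam) \<psi> = 0" for lam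
      using chain[of 0 lam \<psi>] p\<psi> by (simp add: blinfun.diff_left)
    then show ?case by (simp add: cb_def)
  next
    case (Suc k)
    have IH: "norm ((id_blinfun - Pr l) (op_prod A k \<psi>)) \<le> real (cb k l) * \<epsilon> ^ (l + 1)" for l
      using Suc by auto
    have iA: "Suc k \<in> {1..t}" using Suc by auto
    show ?case
    proof
      fix lam
      define y where "y = op_prod A k \<psi>"
      define T where "T = (id_blinfun - Pr lam) o\<^sub>L A (Suc k)"
      have ny: "norm y \<le> 1" using nrm Suc y_def by auto
      have dec: "y = Pr 0 y + (\<Sum>j<lam. Pr (Suc j) ((id_blinfun - Pr j) y))
                     + (id_blinfun - Pr lam) y"
      proof -
        have e: "Pr (Suc j) (Pr j y) = Pr j y" for j
          using chain[of j "Suc j" y] by simp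
        have "(\<Sum>j<lam. Pr (Suc j) y - Pr j y) = Pr lam y - Pr 0 y"
          by (rule sum_lessThan_telescope)
        then show ?thesis by (simp add: e blinfun.diff_left blinfun.diff_right)
      qed
      have lhs: "(id_blinfun - Pr lam) (op_prod A (Suc k) \<psi>) = T y"
        by (simp add: T_def y_def)
      have Ty: "T y = T (Pr 0 y) + (\<Sum>j<lam. T (Pr (Suc j) ((id_blinfun - Pr j) y)))
                     + T ((id_blinfun - Pr lam) y)"
        by (subst dec) (simp add: blinfun.add_right blinfun.sum_right)
      have b0: "norm (T (Pr 0 y)) \<le> \<epsilon> ^ (lam + 1)"
      proof -
        have "norm (T (Pr 0 y)) = norm ((T o\<^sub>L Pr 0) y)" by simp
        also have "\<dots> \<le> norm (T o\<^sub>L Pr 0) * norm y" by (rule norm_blinfun)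
        also have "\<dots> \<le> \<epsilon> ^ (lam + 1) * 1"
          using leak[OF iA, of 0 lam] ny eps unfolding T_def
          by (intro mult_mono) auto
        finally show ?thesis by simp
      qed
      have bj: "norm (T (Pr (Suc j) ((id_blinfun - Pr j) y))) \<le> real (cb k j) * \<epsilon> ^ (lam + 1)"
        if "j < lam" for j
      proof -
        have "norm (T (Pr (Suc j) ((id_blinfun - Pr j) y)))
            = norm ((T o\<^sub>L Pr (Suc j)) ((id_blinfun - Pr j) y))" by simp
        also have "\<dots> \<le> norm (T o\<^sub>L Pr (Suc j)) * norm ((id_blinfun - Pr j) y)"
          by (rule norm_blinfun)
        also have "\<dots> \<le> \<epsilon> ^ (lam - j) * (real (cb k j) * \<epsilon> ^ (j + 1))"
        proof (intro mult_mono)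
          show "norm (T o\<^sub>L Pr (Suc j)) \<le> \<epsilon> ^ (lam - j)"
            using leak[OF iA, of "Suc j" "lam - Suc j"] that unfolding T_def
            by (simp add: Suc_diff_Suc)
          show "norm ((id_blinfun - Pr j) y) \<le> real (cb k j) * \<epsilon> ^ (j + 1)"
            using IH y_def by simp
        qed (use eps in auto)
        also have "\<dots> = real (cb k j) * \<epsilon> ^ (lam + 1)"
        proof -
          have "lam - j + (j + 1) = lam + 1" using that by simp
          then have "\<epsilon> ^ (lam - j) * \<epsilon> ^ (j + 1) = \<epsilon> ^ (lam + 1)"
            by (metis power_add)
          then show ?thesis by (metis mult.left_commute mult.assoc)
        qed
        finally show ?thesis .
      qed
      have bl: "norm (T ((id_blinfun - Pr lam) y)) \<le> real (cb k lam) * \<epsilon> ^ (lam + 1)"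
      proof -
        have "norm (T ((id_blinfun - Pr lam) y))
            \<le> norm (A (Suc k) ((id_blinfun - Pr lam) y))"
          unfolding T_def using proj_contract[OF proj] by simp
        also have "\<dots> \<le> norm (A (Suc k)) * norm ((id_blinfun - Pr lam) y)"
          by (rule norm_blinfun)
        also have "\<dots> \<le> 1 * (real (cb k lam) * \<epsilon> ^ (lam + 1))"
          using normA[OF iA] IH[of lam] y_def by (intro mult_mono) auto
        finally show ?thesis by simp
      qed
      have "norm (T y) \<le> norm (T (Pr 0 y)) + norm (\<Sum>j<lam. T (Pr (Suc j) ((id_blinfun - Pr j) y)))
                     + norm (T ((id_blinfun - Pr lam) y))"
        unfolding Ty by (meson norm_triangle_ineq order_trans add_right_mono)
      also have "\<dots> \<le> \<epsilon> ^ (lam + 1) + (\<Sum>j<lam. real (cb k j) * \<epsilon> ^ (lam + 1))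
                     + real (cb k lam) * \<epsilon> ^ (lam + 1)"
        using b0 bl norm_sum[of "\<lambda>j. T (Pr (Suc j) ((id_blinfun - Pr j) y))" "{..<lam}"]
          sum_mono[of "{..<lam}" "\<lambda>j. norm (T (Pr (Suc j) ((id_blinfun - Pr j) y)))"
              "\<lambda>j. real (cb k j) * \<epsilon> ^ (lam + 1)"] bj
        by (smt (verit) lessThan_iff)
      also have "\<dots> = real (1 + (\<Sum>j\<le>lam. cb k j)) * \<epsilon> ^ (lam + 1)"
        by (simp add: algebra_simps sum_distrib_left sum_distrib_right lessThan_Suc_atMost[symmetric])
      also have "\<dots> = real (cb (Suc k) lam) * \<epsilon> ^ (lam + 1)"
        by (simp add: cb_Suc)
      finally show "norm ((id_blinfun - Pr lam) (op_prod A (Suc k) \<psi>))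
                  \<le> real (cb (Suc k) lam) * \<epsilon> ^ (lam + 1)" using lhs by simp
    qed
  qed
  have "norm ((id_blinfun - Pr lam) (op_prod A t \<psi>)) \<le> real (cb t lam) * \<epsilon> ^ (lam + 1)"
    using main by auto
  also have "\<dots> \<le> real ((t + lam) choose (t - 1)) * \<epsilon> ^ (lam + 1)"
    using eps by (intro mult_right_mono) (auto simp: cb_def)
  finally show "norm ((id_blinfun - Pr lam) (op_prod A t \<psi>))
             \<le> real ((t + lam) choose (t - 1)) * \<epsilon> ^ (lam + 1)" .
qed

end
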